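(* Let $F,G$ be completely multiplicative functions and $s=x+iy$ with $x,y\in\mathbb{R}$ such that $D(F,s)$ and $D(G,\overline{s})$ converge absolutely. Then \[D(F,s)\,D(G,\overline{s})=D(F\times G,2x)\,D\big(F_{y}\,\square\,G_{-y},\,x\big),\] where $F_y(n)=F(n)n^{-iy}$ and $G_{-y}(n)=G(n)n^{iy}$.
   Context: A completely multiplicative function is $F:\mathbb{N}^\star\to\mathbb{C}$ with $F(1)=1$ and $F(ab)=F(a)F(b)$ for all $a,b$. $D(F,s)=\sum_{n\ge1}F(n)n^{-s}$; $n^{it}=e^{it\ln n}$. $(F\times G)(n)=F(n)G(n)$, and $(F\,\square\,G)(m)=\sum_{ab=m,\ \gcd(a,b)=1}F(a)G(b)$ (unitary convolution). *)

theory Defs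
  imports "HOL-Analysis.Analysis"
begin

text \<open>Completely multiplicative arithmetic functions on the positive integers
  (values at 0 are irrelevant).\<close>
definition completely_multiplicative :: "(nat \<Rightarrow> complex) \<Rightarrow> bool" where
  "completely_multiplicative F \<longleftrightarrow>
     F 1 = 1 \<and> (\<forall>a b. 0 < a \<longrightarrow> 0 < b \<longrightarrow> F (a * b) = F a * F b)"

definition dir_term :: "(nat \<Rightarrow> complex) \<Rightarrow> complex \<Rightarrow> nat \<Rightarrow> complex" where
  "dir_term F s n = F n * (of_nat n) powr (- s)"

definition dirichlet_series :: "(nat \<Rightarrow> complex) \<Rightarrow> complex \<Rightarrow> complex" where
  "dirichlet_series F s = (\<Sum>n. dir_term F s (Suc n))"

definition abs_conv_dirichlet :: "(nat \<Rightarrow> complex) \<Rightarrow> complex \<Rightarrow> bool" where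
  "abs_conv_dirichlet F s \<longleftrightarrow> summable (\<lambda>n. norm (dir_term F s (Suc n)))"

definition pmult :: "(nat \<Rightarrow> complex) \<Rightarrow> (nat \<Rightarrow> complex) \<Rightarrow> nat \<Rightarrow> complex" where
  "pmult F G n = F n * G n"

definition unitary_conv :: "(nat \<Rightarrow> complex) \<Rightarrow> (nat \<Rightarrow> complex) \<Rightarrow> nat \<Rightarrow> complex" where
  "unitary_conv F G m = (\<Sum>a\<in>{a. a dvd m \<and> coprime a (m div a)}. F a * G (m div a))"

definition twist :: "(nat \<Rightarrow> complex) \<Rightarrow> real \<Rightarrow> nat \<Rightarrow> complex" where
  "twist F t n = F n * (of_nat n) powr (- (\<i> * complex_of_real t))"

end

theory Submission imports Defs begin

lemma cpowr_nat: "0 < n \<Longrightarrow> (of_nat n :: complex) powr z = exp (z * of_real (ln (real n)))"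
  by (simp add: powr_def)

lemma expeq: "a = b \<Longrightarrow> exp a = exp b" by simp

lemma ac2: "(Z::complex) = X*Y \<Longrightarrow> A*B*Z = A*X*(B*Y)" by (simp add: ac_simps)
lemma ac3: "(X::complex)*Y = P*Q*R \<Longrightarrow> A*X*(B*Y) = A*P*(B*Q)*R" by (simp add: ac_simps)

lemma L1:
  assumes F: "completely_multiplicative F" and G: "completely_multiplicative G"
    and d: "0 < d" and u: "0 < u" and v: "0 < v"
  shows "dir_term F (Complex x y) (d * u) * dir_term G (cnj (Complex x y)) (d * v) =
     dir_term (pmult F G) (complex_of_real (2 * x)) d *
       (dir_term F (Complex x y) u * dir_term G (cnj (Complex x y)) v)"
proof -
  have m: "F (d * u) = F d * F u" "G (d * v) = G d * G v"
    using F G d u v by (auto simp: completely_multiplicative_def)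
  have l: "ln (real (d * u)) = ln (real d) + ln (real u)" "ln (real (d * v)) = ln (real d) + ln (real v)"
    using d u v by (simp_all add: ln_mult)
  have e: "exp (- Complex x y * of_real (ln (real d) + ln (real u))) * exp (- cnj (Complex x y) * of_real (ln (real d) + ln (real v)))
    = exp (- of_real (2 * x) * of_real (ln (real d))) * (exp (- Complex x y * of_real (ln (real u))) * exp (- cnj (Complex x y) * of_real (ln (real v))))"
    apply (simp only: exp_add[symmetric])
    apply (rule expeq)
    apply (simp add: complex_eq_iff algebra_simps)
    done
  show ?thesis (is "?lhs = ?rhs")
  proof -
    have p: "0 < d * u" "0 < d * v" using d u v by auto
    have "dir_term F (Complex x y) (d * u) * dir_term G (cnj (Complex x y)) (d * v)
      = (F d * F u * G d * G v) * (exp (- Complex x y * of_real (ln (real d) + ln (real u))) * exp (- cnj (Complex x y) * of_real (ln (real d) + ln (real v))))"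
      unfolding dir_term_def by (simp only: cpowr_nat[OF p(1)] cpowr_nat[OF p(2)] m l mult_ac)
    also have "\<dots> = (F d * F u * G d * G v) * (exp (- of_real (2 * x) * of_real (ln (real d))) * (exp (- Complex x y * of_real (ln (real u))) * exp (- cnj (Complex x y) * of_real (ln (real v)))))"
      by (simp only: e)
    also have "\<dots> = ?rhs"
      unfolding dir_term_def pmult_def by (simp only: cpowr_nat[OF d] cpowr_nat[OF u] cpowr_nat[OF v] mult_ac)
    finally show ?thesis .
  qed
qed

lemma L2:
  assumes d: "0 < d"
  shows "dir_term (pmult F G) (complex_of_real (2 * x)) d = dir_term F (Complex x y) d * dir_term G (cnj (Complex x y)) d"
proof -
  have e: "exp (- of_real (2 * x) * of_real (ln (real d))) = exp (- Complex x y * of_real (ln (real d))) * exp (- cnj (Complex x y) * of_real (ln (real d)))"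
    apply (simp only: exp_add[symmetric])
    apply (rule expeq)
    apply (simp add: complex_eq_iff algebra_simps)
    done
  show ?thesis unfolding dir_term_def pmult_def
    by (simp only: cpowr_nat[OF d]) (rule ac2[OF e])
qed

lemma L3:
  assumes a: "0 < a" and b: "0 < b"
  shows "dir_term F (Complex x y) a * dir_term G (cnj (Complex x y)) b =
    twist F y a * twist G (- y) b * of_nat (a * b) powr (- complex_of_real x)"
proof -
  have l: "ln (real (a * b)) = ln (real a) + ln (real b)"
    using a b by (simp add: ln_mult)
  have e: "exp (- Complex x y * of_real (ln (real a))) * exp (- cnj (Complex x y) * of_real (ln (real b)))
    = exp (- (\<i> * of_real y) * of_real (ln (real a))) * exp (- (\<i> * of_real (-y)) * of_real (ln (real b))) * exp (- of_real x * of_real (ln (real a) + ln (real b)))"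
    apply (simp only: exp_add[symmetric])
    apply (rule expeq)
    apply (simp add: complex_eq_iff algebra_simps)
    done
  have ab: "0 < a*b" using a b by simp
  show ?thesis unfolding dir_term_def twist_def
    by (simp only: cpowr_nat[OF a] cpowr_nat[OF b] cpowr_nat[OF ab] l) (rule ac3[OF e])
qed

lemma prod_has_sum:
  fixes f :: "'a \<Rightarrow> complex" and g :: "'b \<Rightarrow> complex"
  assumes fs: "f summable_on A" and gs: "g summable_on B"
  shows "((\<lambda>(a,b). f a * g b) has_sum (infsum f A * infsum g B)) (A \<times> B)"
proof -
  have af: "(\<lambda>a. norm (f a)) summable_on A" using fs summable_on_iff_abs_summable_on_complex by blast
  have ag: "(\<lambda>a. norm (g a)) summable_on B" using gs summable_on_iff_abs_summable_on_complex by blast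
  have "(\<lambda>z. norm ((\<lambda>(a,b). f a * g b) z)) summable_on A \<times> B"
  proof (subst Infinite_Sum.abs_summable_on_Sigma_iff, intro conjI ballI)
    fix a assume "a \<in> A"
    show "(\<lambda>b. norm (case (a, b) of (a, b) \<Rightarrow> f a * g b)) summable_on B"
      using summable_on_cmult_right[OF ag, of "norm (f a)"] by (simp add: norm_mult)
  next
    have "(\<lambda>a. norm (f a) * (\<Sum>\<^sub>\<infinity>b\<in>B. norm (g b))) summable_on A"
      by (rule summable_on_cmult_left[OF af])
    moreover have "norm (\<Sum>\<^sub>\<infinity>b\<in>B. norm (case (a, b) of (a, b) \<Rightarrow> f a * g b)) = norm (f a) * (\<Sum>\<^sub>\<infinity>b\<in>B. norm (g b))" for a
      by (simp add: norm_mult infsum_cmult_right' infsum_nonneg)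
    ultimately show "(\<lambda>a. norm (\<Sum>\<^sub>\<infinity>b\<in>B. norm (case (a, b) of (a, b) \<Rightarrow> f a * g b))) summable_on A"
      by simp
  qed
  then have S: "(\<lambda>(a,b). f a * g b) summable_on A \<times> B"
    using summable_on_iff_abs_summable_on_complex by blast
  have "infsum (\<lambda>(a,b). f a * g b) (A \<times> B) = infsum (\<lambda>a. infsum (\<lambda>b. f a * g b) B) A"
    using infsum_Sigma_banach[OF S] by simp
  also have "\<dots> = infsum f A * infsum g B"
    by (simp add: infsum_cmult_right' infsum_cmult_left')
  finally show ?thesis using S by (simp add: has_sum_iff)
qed

lemma range_Suc': "Suc ` UNIV = {0<..}"
proof
  show "{0<..} \<subseteq> Suc ` UNIV"
  proof
    fix n :: nat assume "n \<in> {0<..}"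
    then have "n = Suc (n - 1)" by simp
    then show "n \<in> Suc ` UNIV" by blast
  qed
qed auto

lemma to_has_sum:
  fixes h :: "nat \<Rightarrow> complex"
  assumes "summable (\<lambda>n. norm (h (Suc n)))"
  shows "(h has_sum (\<Sum>n. h (Suc n))) {0<..}"
proof -
  have "((\<lambda>n. h (Suc n)) has_sum (\<Sum>n. h (Suc n))) UNIV"
    by (rule norm_summable_imp_has_sum[OF assms]) (rule summable_sums, rule summable_norm_cancel, rule assms)
  then show ?thesis
    using has_sum_reindex[of Suc UNIV h] by (simp add: range_Suc' o_def)
qed

lemma from_has_sum:
  fixes h :: "nat \<Rightarrow> complex"
  assumes "(h has_sum S) {0<..}"
  shows "(\<Sum>n. h (Suc n)) = S"
proof -
  have "((\<lambda>n. h (Suc n)) has_sum S) UNIV"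
    using assms has_sum_reindex[of Suc UNIV h] by (simp add: range_Suc' o_def)
  from sums_unique[OF has_sum_imp_sums[OF this]] show ?thesis by simp
qed


theorem mainTheorem13:
  fixes F G :: "nat \<Rightarrow> complex" and x y :: real
  assumes "completely_multiplicative F" and "completely_multiplicative G"
    and "abs_conv_dirichlet F (Complex x y)"
    and "abs_conv_dirichlet G (cnj (Complex x y))"
  shows "dirichlet_series F (Complex x y) * dirichlet_series G (cnj (Complex x y)) =
         dirichlet_series (pmult F G) (complex_of_real (2 * x)) *
         dirichlet_series (unitary_conv (twist F y) (twist G (- y))) (complex_of_real x)"
proof -
  define P where "P = ({0<..} :: nat set)"
  define f where "f = dir_term F (Complex x y)"
  define g where "g = dir_term G (cnj (Complex x y))"
  define h where "h = dir_term (pmult F G) (complex_of_real (2 * x))"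
  define Cop where "Cop = {(u,v). 0 < u \<and> 0 < v \<and> coprime u (v::nat)}"
  define q where "q = (\<lambda>(u,v). f u * g v)"
  have hf: "(f has_sum dirichlet_series F (Complex x y)) P"
    using to_has_sum[of f] assms(3) unfolding P_def f_def abs_conv_dirichlet_def dirichlet_series_def by simp
  have hg: "(g has_sum dirichlet_series G (cnj (Complex x y))) P"
    using to_has_sum[of g] assms(4) unfolding P_def g_def abs_conv_dirichlet_def dirichlet_series_def by simp
  have fs: "f summable_on P" and gs: "g summable_on P"
    using hf hg by (auto simp: summable_on_def)
  have AB: "(q has_sum (dirichlet_series F (Complex x y) * dirichlet_series G (cnj (Complex x y)))) (P \<times> P)"
    using prod_has_sum[OF fs gs] hf hg unfolding q_def by (simp add: infsumI)
  have qs: "q summable_on P \<times> P" using AB by (auto simp: summable_on_def)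
  have "q summable_on (\<lambda>d. (d,d)) ` P"
    by (rule summable_on_subset_banach[OF qs]) auto
  then have "(q \<circ> (\<lambda>d. (d,d))) summable_on P"
    by (subst (asm) summable_on_reindex) (auto simp: inj_on_def)
  then have hs: "h summable_on P"
    by (rule summable_on_cong[THEN iffD1, rotated])
       (clarsimp simp: q_def h_def f_def g_def P_def simp del: of_real_mult, rule L2[symmetric], simp)
  have qsC: "q summable_on Cop"
    by (rule summable_on_subset_banach[OF qs]) (auto simp: Cop_def P_def)
  have F2: "((\<lambda>(d,w). h d * q w) has_sum (dirichlet_series F (Complex x y) * dirichlet_series G (cnj (Complex x y)))) (P \<times> Cop)"
  proof -
    have "((\<lambda>(d,w). h d * q w) has_sum (dirichlet_series F (Complex x y) * dirichlet_series G (cnj (Complex x y)))) (P \<times> Cop)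
       = (q has_sum (dirichlet_series F (Complex x y) * dirichlet_series G (cnj (Complex x y)))) (P \<times> P)"
    proof (rule has_sum_reindex_bij_witness[where j = "\<lambda>(d,(u,v)). (d * u, d * v)"
          and i = "\<lambda>(a,b). (gcd a b, (a div gcd a b, b div gcd a b))"])
      fix z assume "z \<in> P \<times> Cop"
      then obtain d u v where z: "z = (d,(u,v))" "0 < d" "0 < u" "0 < v" "coprime u v"
        by (auto simp: P_def Cop_def)
      have "gcd (d * u) (d * v) = d" using z by (simp add: gcd_mult_distrib_nat[symmetric])
      then show "(\<lambda>(a,b). (gcd a b, (a div gcd a b, b div gcd a b))) ((\<lambda>(d,(u,v)). (d * u, d * v)) z) = z"
        using z by simp
      show "(\<lambda>(d,(u,v)). (d * u, d * v)) z \<in> P \<times> P" using z by (simp add: P_def)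
      show "q ((\<lambda>(d,(u,v)). (d * u, d * v)) z) = (\<lambda>(d,w). h d * q w) z"
        using z L1[OF assms(1,2), of d u v x y] by (simp add: q_def f_def g_def h_def)
    next
      fix z assume "z \<in> P \<times> P"
      then obtain a b where z: "z = (a,b)" "0 < a" "0 < b" by (auto simp: P_def)
      have gd: "gcd a b dvd a" "gcd a b dvd b" by auto
      have gp: "0 < gcd a b" using z by simp
      show "(\<lambda>(d,(u,v)). (d * u, d * v)) ((\<lambda>(a,b). (gcd a b, (a div gcd a b, b div gcd a b))) z) = z"
        using z gd by simp
      have "0 < a div gcd a b" "0 < b div gcd a b" using z gd gp
        by (auto simp: div_greater_zero_iff)
      moreover have "coprime (a div gcd a b) (b div gcd a b)"
        using z by (intro div_gcd_coprime) auto
      ultimately show "(\<lambda>(a,b). (gcd a b, (a div gcd a b, b div gcd a b))) z \<in> P \<times> Cop"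
        using z gp by (simp add: P_def Cop_def)
    qed simp
    with AB show ?thesis by simp
  qed
  have F2': "((\<lambda>(d,w). h d * q w) has_sum (infsum h P * infsum q Cop)) (P \<times> Cop)"
    by (rule prod_has_sum[OF hs qsC])
  have eq: "dirichlet_series F (Complex x y) * dirichlet_series G (cnj (Complex x y)) = infsum h P * infsum q Cop"
    using has_sum_unique[OF F2 F2'] .
  have Dh: "dirichlet_series (pmult F G) (complex_of_real (2 * x)) = infsum h P"
    unfolding dirichlet_series_def
    by (rule from_has_sum) (use hs in \<open>simp add: h_def P_def has_sum_infsum\<close>)
  define Sd where "Sd m = {a. a dvd m \<and> coprime a (m div a)}" for m :: nat
  define r where "r = (\<lambda>(m,a). f a * g (m div a))"
  have qC: "(q has_sum infsum q Cop) Cop" using qsC by (simp add: has_sum_infsum)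
  have rS: "(r has_sum infsum q Cop) (Sigma P Sd)"
  proof -
    have "(q has_sum infsum q Cop) Cop = (r has_sum infsum q Cop) (Sigma P Sd)"
    proof (rule has_sum_reindex_bij_witness[where j = "\<lambda>(u,v). (u * v, u)"
          and i = "\<lambda>(m,a). (a, m div a)"])
      fix z assume "z \<in> Cop"
      then obtain u v where z: "z = (u,v)" "0 < u" "0 < v" "coprime u v"
        by (auto simp: Cop_def)
      show "(\<lambda>(m,a). (a, m div a)) ((\<lambda>(u,v). (u * v, u)) z) = z" using z by simp
      show "(\<lambda>(u,v). (u * v, u)) z \<in> Sigma P Sd" using z by (simp add: P_def Sd_def)
      show "r ((\<lambda>(u,v). (u * v, u)) z) = q z" using z by (simp add: r_def q_def)
    next
      fix z assume "z \<in> Sigma P Sd"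
      then obtain m a where z: "z = (m,a)" "0 < m" "a dvd m" "coprime a (m div a)"
        by (auto simp: P_def Sd_def)
      show "(\<lambda>(u,v). (u * v, u)) ((\<lambda>(m,a). (a, m div a)) z) = z" using z by simp
      have "0 < a" using z by (auto intro: Nat.gr0I)
      moreover have "0 < m div a" using z by (auto simp: div_greater_zero_iff dest: dvd_imp_le)
      ultimately show "(\<lambda>(m,a). (a, m div a)) z \<in> Cop" using z by (simp add: Cop_def)
    qed simp
    with qC show ?thesis by simp
  qed
  have fin: "finite (Sd m)" if "0 < m" for m
    by (rule finite_subset[of _ "{..m}"]) (use that in \<open>auto simp: Sd_def dest: dvd_imp_le\<close>)
  have U: "((\<lambda>m. dir_term (unitary_conv (twist F y) (twist G (- y))) (complex_of_real x) m) has_sum infsum q Cop) P"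
  proof (rule has_sum_SigmaD[OF rS])
    fix m assume m: "m \<in> P"
    have "(\<Sum>a\<in>Sd m. r (m,a)) = dir_term (unitary_conv (twist F y) (twist G (- y))) (complex_of_real x) m"
      unfolding dir_term_def unitary_conv_def sum_distrib_right Sd_def[symmetric]
    proof (rule sum.cong)
      fix a assume a: "a \<in> Sd m"
      have "0 < m" using m by (simp add: P_def)
      with a have ap: "0 < a" "0 < m div a" "a * (m div a) = m"
        by (auto simp: Sd_def div_greater_zero_iff dest: dvd_imp_le intro: Nat.gr0I)
      show "r (m, a) = twist F y a * twist G (- y) (m div a) * of_nat m powr - complex_of_real x"
        using L3[OF ap(1,2), of F x y G] ap(3) by (simp add: r_def f_def g_def)
    qed simp
    then show "((\<lambda>a. r (m,a)) has_sum dir_term (unitary_conv (twist F y) (twist G (- y))) (complex_of_real x) m) (Sd m)"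
      using fin[of m] m by (auto simp: P_def intro: has_sum_finiteI)
  qed
  have DU: "dirichlet_series (unitary_conv (twist F y) (twist G (- y))) (complex_of_real x) = infsum q Cop"
    unfolding dirichlet_series_def by (rule from_has_sum) (use U in \<open>simp add: P_def\<close>)
  show ?thesis using eq Dh DU by simp
qed

end
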